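(* Suppose there exist $\kappa \in \mathbb{R}$ and a function $f:\mathbb{N}\to\mathbb{R}$ such that $\lambda_3(G) \le \kappa|V(G)| + f(|V(G)|)$ for every simple graph $G$ with at least $3$ vertices. If $\frac{f(n)}{n} \to 0$ as $n \to \infty$, then every simple graph $G$ with at least $3$ vertices satisfies \[ \lambda_3(G) \le \kappa |V(G)| - 1. \]
   Context: $\lambda_3(G)$ denotes the third largest eigenvalue (with multiplicity) of the adjacency matrix of $G$. *)

theory Defs
  imports "Jordan_Normal_Form.Char_Poly" "HOL-Computational_Algebra.Polynomial"
begin

text \<open>A simple graph on the vertex set {0..<n}, given by an edge relation E
  (only its restriction to {0..<n} matters): symmetric and loop-free.\<close>
definition simple_graph :: "nat \<Rightarrow> (nat \<Rightarrow> nat \<Rightarrow> bool) \<Rightarrow> bool" where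
  "simple_graph n E \<longleftrightarrow> (\<forall>i<n. \<forall>j<n. E i j = E j i) \<and> (\<forall>i<n. \<not> E i i)"

definition adj_matrix :: "nat \<Rightarrow> (nat \<Rightarrow> nat \<Rightarrow> bool) \<Rightarrow> real mat" where
  "adj_matrix n E = mat n n (\<lambda>(i, j). if E i j then 1 else 0)"

text \<open>Multiset of (real) eigenvalues with algebraic multiplicity = roots of the
  characteristic polynomial (the adjacency matrix is real symmetric, so this has size n).\<close>
definition eigenvalues_mset :: "nat \<Rightarrow> (nat \<Rightarrow> nat \<Rightarrow> bool) \<Rightarrow> real multiset" where
  "eigenvalues_mset n E = proots (char_poly (adj_matrix n E))"

definition kth_largest_eigenvalue :: "nat \<Rightarrow> nat \<Rightarrow> (nat \<Rightarrow> nat \<Rightarrow> bool) \<Rightarrow> real" where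
  "kth_largest_eigenvalue k n E = rev (sorted_list_of_multiset (eigenvalues_mset n E)) ! (k - 1)"

definition lambda3 :: "nat \<Rightarrow> (nat \<Rightarrow> nat \<Rightarrow> bool) \<Rightarrow> real" where
  "lambda3 n E = kth_largest_eigenvalue 3 n E"

end

theory Submission
  imports Defs "Jordan_Normal_Form.Schur_Decomposition"
begin

lemma desc_nth: fixes L :: "real list"
  assumes "L = rev (sorted_list_of_multiset X)" "i \<le> j" "j < length L"
  shows "L ! j \<le> L ! i"
proof -
  have "sorted (rev L)" using assms(1) by simp
  hence "sorted_wrt (\<ge>) L" by (simp add: sorted_wrt_rev)
  thus ?thesis using assms(2,3) 
    by (cases "i = j") (auto simp: sorted_wrt_iff_nth_less)
qed

lemma third_a: fixes X :: "real multiset"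
  assumes "3 \<le> size X"
  shows "3 \<le> size (filter_mset (\<lambda>x. rev (sorted_list_of_multiset X) ! 2 \<le> x) X)"
proof -
  define L where "L = rev (sorted_list_of_multiset X)"
  have X: "X = mset L" unfolding L_def by simp
  have len: "3 \<le> length L" using assms X by simp
  have "\<forall>x\<in>set (take 3 L). L ! 2 \<le> x"
  proof
    fix x assume "x \<in> set (take 3 L)"
    then obtain i where "i < 3" "x = L ! i" using len
      by (auto simp: in_set_conv_nth)
    thus "L ! 2 \<le> x" using desc_nth[OF L_def, of i 2] len by auto
  qed
  hence "filter (\<lambda>x. L ! 2 \<le> x) (take 3 L) = take 3 L" by simp
  hence "3 \<le> length (filter (\<lambda>x. L ! 2 \<le> x) (take 3 L))" using len by simp
  also have "\<dots> \<le> length (filter (\<lambda>x. L ! 2 \<le> x) L)"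
  proof -
    have "filter (\<lambda>x. L ! 2 \<le> x) L = filter (\<lambda>x. L ! 2 \<le> x) (take 3 L) @ filter (\<lambda>x. L ! 2 \<le> x) (drop 3 L)"
      by (metis append_take_drop_id filter_append)
    thus ?thesis by simp
  qed
  finally have "3 \<le> length (filter (\<lambda>x. L ! 2 \<le> x) L)" .
  moreover have "size (filter_mset (\<lambda>x. L ! 2 \<le> x) (mset L)) = length (filter (\<lambda>x. L ! 2 \<le> x) L)"
    by (metis mset_filter size_mset)
  ultimately have "3 \<le> size (filter_mset (\<lambda>x. L ! 2 \<le> x) X)" using X by simp
  thus ?thesis unfolding L_def .
qed

lemma third_b: fixes X :: "real multiset"
  assumes "3 \<le> size (filter_mset (\<lambda>x. c \<le> x) X)"
  shows "c \<le> rev (sorted_list_of_multiset X) ! 2"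
proof (rule ccontr)
  define L where "L = rev (sorted_list_of_multiset X)"
  have X: "X = mset L" unfolding L_def by simp
  assume "\<not> c \<le> rev (sorted_list_of_multiset X) ! 2"
  hence lt: "L ! 2 < c" unfolding L_def by simp
  have "filter (\<lambda>x. c \<le> x) (drop 2 L) = []"
  proof (rule filter_False, intro ballI)
    fix x assume "x \<in> set (drop 2 L)"
    then obtain i where "i < length L - 2" "x = L ! (2 + i)"
      by (auto simp: in_set_conv_nth)
    moreover have "2 + i < length L" using \<open>i < length L - 2\<close> by linarith
    ultimately show "\<not> c \<le> x" using desc_nth[OF L_def, of 2 "2+i"] lt by auto
  qed
  hence "length (filter (\<lambda>x. c \<le> x) L) = length (filter (\<lambda>x. c \<le> x) (take 2 L))"
    by (metis append_Nil2 append_take_drop_id filter_append)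
  also have "\<dots> \<le> length (take 2 L)" by (rule length_filter_le)
  also have "\<dots> \<le> 2" by simp
  finally have "length (filter (\<lambda>x. c \<le> x) L) \<le> 2" .
  with assms show False unfolding X by (metis mset_filter size_mset not_numeral_le_zero numeral_le_iff semiring_norm(69) le_trans numeral_3_eq_3 Suc_n_not_le_n eval_nat_numeral(3))
qed

lemma proots_lin: "proots (\<Prod>a\<leftarrow>(as::real list). [:- a, 1:]) = mset as"
proof (induction as)
  case Nil then show ?case by simp
next
  case (Cons a as)
  have "proots ([:- a, 1:] * (\<Prod>a\<leftarrow>as. [:- a, 1:])) = proots [:- a, 1:] + proots (\<Prod>a\<leftarrow>as. [:- a, 1:])"
    by (rule proots_mult) (auto simp: prod_list_zero_iff)
  then show ?case using Cons by simp
qed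

interpretation of_real_poly_hom2: map_poly_inj_idom_hom "of_real :: real \<Rightarrow> complex" ..

lemma map_lin_prod: "map_poly (of_real :: real \<Rightarrow> complex) (\<Prod>b\<leftarrow>bs. [:- b, 1:]) = (\<Prod>b\<leftarrow>bs. [:- of_real b, 1:])"
proof (induction bs)
  case (Cons a bs)
  have "map_poly (of_real :: real \<Rightarrow> complex) ([:- a, 1:] * (\<Prod>b\<leftarrow>bs. [:- b, 1:]))
     = map_poly of_real [:- a, 1:] * map_poly of_real (\<Prod>b\<leftarrow>bs. [:- b, 1:])"
    by (rule of_real_poly_hom2.hom_mult)
  also have "map_poly (of_real :: real \<Rightarrow> complex) [:- a, 1:] = [:- of_real a, 1:]" by simp
  finally show ?case using Cons by simp
qed simp

lemma eig_real:
  fixes A :: "real mat"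
  assumes A: "A \<in> carrier_mat n n" and sym: "\<And>i j. i < n \<Longrightarrow> j < n \<Longrightarrow> A $$ (i,j) = A $$ (j,i)"
    and ev: "eigenvalue (map_mat complex_of_real A) a"
  shows "a = of_real (Re a)"
proof -
  let ?Ac = "map_mat complex_of_real A"
  from ev obtain v where v: "v \<in> carrier_vec n" "v \<noteq> 0\<^sub>v n" "?Ac *\<^sub>v v = a \<cdot>\<^sub>v v"
    unfolding eigenvalue_def eigenvector_def using A by auto
  have Av: "(?Ac *\<^sub>v v) $ i = (\<Sum>j<n. of_real (A $$ (i,j)) * v $ j)" if "i < n" for i
    using that A v(1) by (auto simp: scalar_prod_def row_def intro!: sum.cong)
  define s where "s = (\<Sum>i<n. cnj (v $ i) * (?Ac *\<^sub>v v) $ i)"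
  define w where "w = (\<Sum>i<n. cnj (v $ i) * v $ i)"
  have s1: "s = a * w" unfolding s_def w_def v(3) using v(1)
    by (auto simp: sum_distrib_left intro!: sum.cong)
  have s2: "s = (\<Sum>i<n. \<Sum>j<n. of_real (A $$ (i,j)) * cnj (v $ i) * v $ j)"
    unfolding s_def by (auto simp: Av sum_distrib_left intro!: sum.cong)
  have "cnj s = (\<Sum>i<n. \<Sum>j<n. of_real (A $$ (i,j)) * v $ i * cnj (v $ j))"
    unfolding s2 by (simp add: mult.commute mult.left_commute)
  also have "\<dots> = (\<Sum>j<n. \<Sum>i<n. of_real (A $$ (i,j)) * v $ i * cnj (v $ j))"
    by (rule sum.swap)
  also have "\<dots> = s" unfolding s2
    by (auto simp: sym mult.commute mult.left_commute intro!: sum.cong)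
  finally have cs: "cnj s = s" .
  have "w = (\<Sum>i<n. of_real (((Re (v $ i))^2 + (Im (v $ i))^2)))" unfolding w_def
  proof (intro sum.cong refl)
    fix x show "cnj (v $ x) * v $ x = complex_of_real ((Re (v $ x))^2 + (Im (v $ x))^2)"
      using complex_mult_cnj[of "v $ x"] by (simp only: mult.commute)
  qed
  hence wr: "w = of_real (\<Sum>i<n. ((Re (v $ i))^2 + (Im (v $ i))^2))" by (simp add: of_real_sum)
  have "\<exists>i<n. v $ i \<noteq> 0"
  proof (rule ccontr)
    assume "\<not> (\<exists>i<n. v $ i \<noteq> 0)"
    hence "v = 0\<^sub>v n" using v(1) by (intro eq_vecI) auto
    with v(2) show False by simp
  qed
  then obtain i where i: "i < n" "v $ i \<noteq> 0" by blast
  have "Re (v $ i) \<noteq> 0 \<or> Im (v $ i) \<noteq> 0" using i(2) complex_eq_iff[of "v $ i" 0] by auto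
  hence "((Re (v $ i))^2 + (Im (v $ i))^2) > 0" by (simp add: sum_power2_gt_zero_iff)
  hence wpos: "(\<Sum>i<n. ((Re (v $ i))^2 + (Im (v $ i))^2)) > 0"
    using i by (intro sum_pos2[of "{..<n}" i]) auto
  have "Im (cnj s) = Im s" using cs by simp
  hence "Im s = 0" by simp
  hence "Im (a * w) = 0" using s1 by simp
  hence "Im a * (\<Sum>i<n. ((Re (v $ i))^2 + (Im (v $ i))^2)) = 0" unfolding wr by simp
  hence "Im a = 0" using wpos by simp
  thus ?thesis by (simp add: complex_eq_iff)
qed

lemma real_sym_split:
  fixes A :: "real mat"
  assumes A: "A \<in> carrier_mat n n" and sym: "\<And>i j. i < n \<Longrightarrow> j < n \<Longrightarrow> A $$ (i,j) = A $$ (j,i)"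
  shows "\<exists>es. char_poly A = (\<Prod>a\<leftarrow>es. [:- a, 1:]) \<and> length es = n"
proof -
  let ?Ac = "map_mat complex_of_real A"
  have Ac: "?Ac \<in> carrier_mat n n" using A by simp
  obtain as where as: "char_poly ?Ac = (\<Prod>a\<leftarrow>as. [:- a, 1:])" "length as = n"
    using char_poly_factorized[OF Ac] by blast
  have re: "a = of_real (Re a)" if "a \<in> set as" for a
  proof (rule eig_real[OF A sym])
    have "poly (char_poly ?Ac) a = 0" unfolding as(1) using that
      by (auto simp: poly_prod_list prod_list_zero_iff)
    thus "eigenvalue ?Ac a" using eigenvalue_root_char_poly[OF Ac] by simp
  qed auto
  have "map_poly of_real (char_poly A) = char_poly ?Ac"
    by (rule of_real_hom.char_poly_hom[OF A, symmetric])
  also have "\<dots> = (\<Prod>a\<leftarrow>map Re as. [:- of_real a, 1:])" unfolding as(1) using re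
    by (induction as) auto
  also have "\<dots> = map_poly of_real (\<Prod>a\<leftarrow>map Re as. [:- a, 1:])"
    by (rule map_lin_prod[symmetric])
  finally have "char_poly A = (\<Prod>a\<leftarrow>map Re as. [:- a, 1:])"
    using of_real_poly_hom2.eq_iff by blast
  thus ?thesis using as(2) by (intro exI[of _ "map Re as"]) simp
qed

lemma affine_char_poly:
  fixes A :: "real mat" and t c :: real
  assumes A: "A \<in> carrier_mat n n" and lin: "char_poly A = (\<Prod>a\<leftarrow>es. [:- a, 1:])"
  shows "\<exists>ds. char_poly A = (\<Prod>a\<leftarrow>ds. [:- a, 1:]) \<and>
      char_poly (t \<cdot>\<^sub>m A + c \<cdot>\<^sub>m 1\<^sub>m n) = (\<Prod>a\<leftarrow>ds. [:- (t * a + c), 1:])"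
proof -
  define B where "B = schur_upper_triangular A es"
  have B: "B \<in> carrier_mat n n" "upper_triangular B" "similar_mat A B"
    using schur_upper_triangular[OF A lin] unfolding B_def by auto
  obtain m P Q where PQ: "{A,B,P,Q} \<subseteq> carrier_mat m m" "P * Q = 1\<^sub>m m" "Q * P = 1\<^sub>m m" "A = P * B * Q"
    using similar_matD[OF B(3)] by blast
  have mn: "m = n" using PQ(1) A by auto
  have P: "P \<in> carrier_mat n n" and Q: "Q \<in> carrier_mat n n" using PQ(1) mn by auto
  define B' where "B' = t \<cdot>\<^sub>m B + c \<cdot>\<^sub>m 1\<^sub>m n"
  have B'c: "B' \<in> carrier_mat n n" unfolding B'_def using B by auto
  have "P * B' = P * (t \<cdot>\<^sub>m B) + P * (c \<cdot>\<^sub>m 1\<^sub>m n)"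
    unfolding B'_def by (rule mult_add_distrib_mat[OF P]) (use B(1) in auto)
  also have "\<dots> = t \<cdot>\<^sub>m (P * B) + c \<cdot>\<^sub>m (P * 1\<^sub>m n)"
    using mult_smult_distrib[OF P B(1)] mult_smult_distrib[OF P one_carrier_mat] by simp
  also have "\<dots> = t \<cdot>\<^sub>m (P * B) + c \<cdot>\<^sub>m P" using P by simp
  finally have "P * B' = t \<cdot>\<^sub>m (P * B) + c \<cdot>\<^sub>m P" .
  hence "P * B' * Q = (t \<cdot>\<^sub>m (P * B) + c \<cdot>\<^sub>m P) * Q" by simp
  also have "\<dots> = t \<cdot>\<^sub>m (P * B * Q) + c \<cdot>\<^sub>m (P * Q)"
    using P Q B(1)
    by (simp add: add_mult_distrib_mat[of _ n n] mult_smult_assoc_mat[of _ n n])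
  also have "\<dots> = t \<cdot>\<^sub>m A + c \<cdot>\<^sub>m 1\<^sub>m n" using PQ mn by simp
  finally have eq: "t \<cdot>\<^sub>m A + c \<cdot>\<^sub>m 1\<^sub>m n = P * B' * Q" by simp
  have sim: "similar_mat (t \<cdot>\<^sub>m A + c \<cdot>\<^sub>m 1\<^sub>m n) B'"
    unfolding similar_mat_def similar_mat_wit_def Let_def
    by (rule exI[of _ P], rule exI[of _ Q], insert eq P Q B'c PQ mn A, auto)
  have ut: "upper_triangular B'" using B(2) B(1) unfolding B'_def upper_triangular_def by auto
  have dg: "diag_mat B' = map (\<lambda>a. t * a + c) (diag_mat B)"
    unfolding B'_def diag_mat_def using B(1) by auto
  have "char_poly A = (\<Prod>a\<leftarrow>diag_mat B. [:- a, 1:])"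
    using char_poly_similar[OF B(3)] char_poly_upper_triangular[OF B(1) B(2)] by simp
  moreover have "char_poly (t \<cdot>\<^sub>m A + c \<cdot>\<^sub>m 1\<^sub>m n) = (\<Prod>a\<leftarrow>diag_mat B. [:- (t * a + c), 1:])"
    using char_poly_similar[OF sim] char_poly_upper_triangular[OF B'c ut] dg by (simp add: o_def)
  ultimately show ?thesis by blast
qed

lemma L1:
  fixes g :: "nat \<Rightarrow> real"
  assumes "k < N" "n \<le> N" "0 < n"
  shows "(\<Sum>m<N. (if k = m \<or> (m < n \<and> m = k mod n) then 1 else 0) * g m)
    = g k + (if n \<le> k then g (k mod n) else 0)"
proof -
  have "(\<Sum>m<N. (if k = m \<or> (m < n \<and> m = k mod n) then 1 else 0) * g m)
     = (\<Sum>m<N. (if m = k then g m else 0) + (if m = k mod n then (if n \<le> k then g m else 0) else 0))"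
  proof (rule sum.cong[OF refl])
    fix m assume "m \<in> {..<N}"
    have a: "k mod n < n" using assms(3) by simp
    show "(if k = m \<or> (m < n \<and> m = k mod n) then 1 else 0) * g m
        = (if m = k then g m else 0) + (if m = k mod n then (if n \<le> k then g m else 0) else 0)"
    proof (cases "n \<le> k")
      case True
      then show ?thesis using a by auto
    next
      case False
      then show ?thesis by auto
    qed
  qed
  also have "\<dots> = g k + (if n \<le> k then g (k mod n) else 0)"
  proof -
    have "k mod n < N" using assms by (meson order.strict_trans2 mod_less_divisor)
    thus ?thesis using assms by (simp add: sum.distrib)
  qed
  finally show ?thesis .
qed

lemma LQ:
  fixes g :: "nat \<Rightarrow> real"
  assumes "k < N" "n \<le> N" "0 < n"
  shows "(\<Sum>m<N. ((if k = m then 1 else 0) - (if n \<le> k \<and> m = k mod n then 1 else 0)) * g m)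
    = g k - (if n \<le> k then g (k mod n) else 0)"
proof -
  have "(\<Sum>m<N. ((if k = m then 1 else 0) - (if n \<le> k \<and> m = k mod n then 1 else 0)) * g m)
     = (\<Sum>m<N. (if m = k then g m else 0) - (if m = k mod n then (if n \<le> k then g m else 0) else 0))"
    by (rule sum.cong[OF refl]) auto
  also have "\<dots> = g k - (if n \<le> k then g (k mod n) else 0)"
  proof -
    have "k mod n < N" using assms by (meson order.strict_trans2 mod_less_divisor)
    thus ?thesis using assms by (simp add: sum_subtractf)
  qed
  finally show ?thesis .
qed

lemma L2:
  fixes g :: "nat \<Rightarrow> real"
  assumes "l < N"
  shows "(\<Sum>m<N. g m * (if m = l \<or> (l < n \<and> l = m mod n) then 1 else 0))
    = (if l < n then (\<Sum>m<N. if m mod n = l then g m else 0) else g l)"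
proof (cases "l < n")
  case True
  have "(\<Sum>m<N. g m * (if m = l \<or> (l < n \<and> l = m mod n) then 1 else 0))
     = (\<Sum>m<N. if m mod n = l then g m else 0)"
    by (rule sum.cong[OF refl]) (use True in auto)
  then show ?thesis using True by simp
next
  case False
  have "(\<Sum>m<N. g m * (if m = l \<or> (l < n \<and> l = m mod n) then 1 else 0))
     = (\<Sum>m<N. if m = l then g m else 0)"
    by (rule sum.cong[OF refl]) (use False in auto)
  then show ?thesis using False assms by simp
qed

lemma L3:
  fixes h :: "nat \<Rightarrow> real"
  assumes "l < n"
  shows "(\<Sum>m<t * n. if m mod n = l then h (m mod n) else 0) = real t * h l"
proof -
  have inner: "(\<Sum>m\<in>{a * n..<a * n + n}. if m mod n = l then h (m mod n) else 0) = h l" for a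
  proof -
    have "(\<Sum>m\<in>{a * n..<a * n + n}. if m mod n = l then h (m mod n) else 0)
        = (\<Sum>m\<in>{0 + a * n..<n + a * n}. if m mod n = l then h (m mod n) else 0)"
      by (simp add: add.commute)
    also have "\<dots> = (\<Sum>j\<in>{0..<n}. if (j + a * n) mod n = l then h ((j + a * n) mod n) else 0)"
      by (rule sum.shift_bounds_nat_ivl)
    also have "\<dots> = (\<Sum>j\<in>{0..<n}. if j = l then h l else 0)"
      by (rule sum.cong[OF refl]) auto
    also have "\<dots> = h l" using assms by simp
    finally show ?thesis .
  qed
  have "(\<Sum>m<t * n. if m mod n = l then h (m mod n) else 0)
     = (\<Sum>a<t. \<Sum>m\<in>{a * n..<a * n + n}. if m mod n = l then h (m mod n) else 0)"
    by (rule sum.nat_group[symmetric])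
  also have "\<dots> = real t * h l" by (simp add: inner)
  finally show ?thesis .
qed

lemma mult_entry:
  assumes "A \<in> carrier_mat N N" "B \<in> carrier_mat N N" "k < N" "l < N"
  shows "(A * B) $$ (k,l) = (\<Sum>m<N. A $$ (k,m) * B $$ (m,l))"
  using assms by (auto simp: scalar_prod_def lessThan_atLeast0 intro!: sum.cong)

lemma blowup:
  fixes E :: "nat \<Rightarrow> nat \<Rightarrow> bool" and t n :: nat
  assumes n: "0 < n" and t: "1 \<le> t" and sg: "simple_graph n E"
    and lin: "char_poly (adj_matrix n E) = (\<Prod>a\<leftarrow>es. [:- a, 1:])"
    and E'_def: "E' = (\<lambda>k l. k \<noteq> l \<and> (k mod n = l mod n \<or> E (k mod n) (l mod n)))"
  shows "\<exists>ds rs. char_poly (adj_matrix n E) = (\<Prod>a\<leftarrow>ds. [:- a, 1:]) \<and>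
     char_poly (adj_matrix (t * n) E') = (\<Prod>a\<leftarrow>map (\<lambda>a. real t * a + (real t - 1)) ds @ rs. [:- a, 1:])"
proof -
  define N where "N = t * n"
  have nN: "n \<le> N" unfolding N_def using t by simp
  define c :: "nat \<Rightarrow> nat \<Rightarrow> real" where "c = (\<lambda>i j. if i = j \<or> E i j then 1 else 0)"
  define Am where "Am = adj_matrix n E"
  have Am: "Am \<in> carrier_mat n n" unfolding Am_def adj_matrix_def by simp
  have Amij: "Am $$ (i,j) = (if E i j then 1 else 0)" if "i < n" "j < n" for i j
    using that unfolding Am_def adj_matrix_def by simp
  define Bm where "Bm = adj_matrix N E'"
  have Bm: "Bm \<in> carrier_mat N N" unfolding Bm_def adj_matrix_def by simp
  have Bmij: "Bm $$ (k,l) = c (k mod n) (l mod n) - (if k = l then 1 else 0)" if "k < N" "l < N" for k l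
  proof -
    have "\<not> E (k mod n) (k mod n)" using sg n unfolding simple_graph_def by simp
    thus ?thesis using that unfolding Bm_def adj_matrix_def E'_def c_def by auto
  qed
  define pf :: "nat \<Rightarrow> nat \<Rightarrow> real" where "pf = (\<lambda>k l. if k = l \<or> (l < n \<and> l = k mod n) then 1 else 0)"
  define qf :: "nat \<Rightarrow> nat \<Rightarrow> real" where "qf = (\<lambda>k l. (if k = l then 1 else 0) - (if n \<le> k \<and> l = k mod n then 1 else 0))"
  define Pm where "Pm = mat N N (\<lambda>(k,l). pf k l)"
  define Qm where "Qm = mat N N (\<lambda>(k,l). qf k l)"
  have Pm: "Pm \<in> carrier_mat N N" and Qm: "Qm \<in> carrier_mat N N" unfolding Pm_def Qm_def by auto
  define D1 where "D1 = real t \<cdot>\<^sub>m Am + (real t - 1) \<cdot>\<^sub>m 1\<^sub>m n"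
  define D2 where "D2 = mat n (N - n) (\<lambda>(k,j). c k (j mod n))"
  define D4 :: "real mat" where "D4 = mat (N - n) (N - n) (\<lambda>(i,j). if i = j then -1 else 0)"
  define Dm where "Dm = four_block_mat D1 D2 (0\<^sub>m (N - n) n) D4"
  have D1: "D1 \<in> carrier_mat n n" unfolding D1_def using Am by simp
  have D2: "D2 \<in> carrier_mat n (N - n)" unfolding D2_def by simp
  have D4: "D4 \<in> carrier_mat (N - n) (N - n)" unfolding D4_def by simp
  have Dm: "Dm \<in> carrier_mat N N" unfolding Dm_def using D1 D2 D4 nN
    by (metis four_block_carrier_mat le_add_diff_inverse)
  define df where "df = (\<lambda>k l. if k < n then (if l < n then real t * c k l - (if k = l then 1 else 0) else c k (l mod n)) else - (if k = l then 1 else 0) :: real)"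
  have Dmij: "Dm $$ (k,l) = df k l" if "k < N" "l < N" for k l
  proof -
    have "Dm $$ (k,l) = (if k < n then if l < n then D1 $$ (k,l) else D2 $$ (k, l - n)
          else if l < n then (0\<^sub>m (N - n) n) $$ (k - n, l) else D4 $$ (k - n, l - n))"
      unfolding Dm_def using D1 D2 D4 that nN by (subst index_mat_four_block) auto
    also have "\<dots> = df k l"
    proof -
      have "E k k = False" if "k < n" for k using sg that unfolding simple_graph_def by simp
      moreover have "(l - n) mod n = l mod n" if "n \<le> l" using that by (simp add: le_mod_geq)
      ultimately show ?thesis unfolding df_def D1_def D2_def D4_def c_def using that Am
        by (auto simp: Amij)
    qed
    finally show ?thesis .
  qed
  have PQ: "Pm * Qm = 1\<^sub>m N"
  proof (rule eq_matI)
    fix k l assume kl: "k < dim_row (1\<^sub>m N)" "l < dim_col (1\<^sub>m N)"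
    hence kl: "k < N" "l < N" by auto
    have "(Pm * Qm) $$ (k,l) = (\<Sum>m<N. pf k m * qf m l)"
      using mult_entry[OF Pm Qm kl] kl unfolding Pm_def Qm_def by (auto intro!: sum.cong)
    also have "\<dots> = qf k l + (if n \<le> k then qf (k mod n) l else 0)"
      unfolding pf_def by (rule L1[OF kl(1) nN n])
    also have "\<dots> = (1\<^sub>m N) $$ (k,l)" unfolding qf_def using kl n mod_less_divisor[OF n, of k] by auto
    finally show "(Pm * Qm) $$ (k,l) = (1\<^sub>m N) $$ (k,l)" .
  qed (use Pm Qm in auto)
  have QP: "Qm * Pm = 1\<^sub>m N"
  proof (rule eq_matI)
    fix k l assume kl: "k < dim_row (1\<^sub>m N)" "l < dim_col (1\<^sub>m N)"
    hence kl: "k < N" "l < N" by auto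
    have "(Qm * Pm) $$ (k,l) = (\<Sum>m<N. qf k m * pf m l)"
      using mult_entry[OF Qm Pm kl] kl unfolding Pm_def Qm_def by (auto intro!: sum.cong)
    also have "\<dots> = pf k l - (if n \<le> k then pf (k mod n) l else 0)"
      unfolding qf_def by (rule LQ[OF kl(1) nN n])
    also have "\<dots> = (1\<^sub>m N) $$ (k,l)" unfolding pf_def using kl n mod_less_divisor[OF n, of k] by auto
    finally show "(Qm * Pm) $$ (k,l) = (1\<^sub>m N) $$ (k,l)" .
  qed (use Pm Qm in auto)
  have BP_PD: "Bm * Pm = Pm * Dm"
  proof (rule eq_matI)
    fix k l assume kl: "k < dim_row (Pm * Dm)" "l < dim_col (Pm * Dm)"
    hence kl: "k < N" "l < N" using Pm Dm by auto
    have lhs: "(Bm * Pm) $$ (k,l) = (\<Sum>m<N. (c (k mod n) (m mod n) - (if k = m then 1 else 0)) * pf m l)"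
      using mult_entry[OF Bm Pm kl] kl unfolding Pm_def by (auto simp: Bmij intro!: sum.cong)
    also have "\<dots> = (if l < n then (\<Sum>m<N. if m mod n = l then c (k mod n) (m mod n) - (if k = m then 1 else 0) else 0)
        else c (k mod n) (l mod n) - (if k = l then 1 else 0))"
      unfolding pf_def by (rule L2[OF kl(2)])
    also have "\<dots> = (if l < n then real t * c (k mod n) l - (if k mod n = l then 1 else 0)
        else c (k mod n) (l mod n) - (if k = l then 1 else 0))"
    proof (cases "l < n")
      case True
      have "(\<Sum>m<N. if m mod n = l then c (k mod n) (m mod n) - (if k = m then 1 else 0) else 0)
        = (\<Sum>m<N. if m mod n = l then c (k mod n) (m mod n) else 0) - (\<Sum>m<N. if m = k then (if k mod n = l then 1 else 0) else 0)"
        by (subst sum_subtractf[symmetric], rule sum.cong) auto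
      also have "\<dots> = real t * c (k mod n) l - (if k mod n = l then 1 else 0)"
        using L3[OF True, of "c (k mod n)" t] kl unfolding N_def by simp
      finally show ?thesis using True by simp
    qed simp
    also have "\<dots> = df k l + (if n \<le> k then df (k mod n) l else 0)"
      unfolding df_def using kl n mod_less_divisor[OF n, of k] by (auto simp: c_def)
    also have "\<dots> = (\<Sum>m<N. pf k m * df m l)"
      unfolding pf_def by (rule L1[OF kl(1) nN n, symmetric])
    also have "\<dots> = (Pm * Dm) $$ (k,l)"
      using mult_entry[OF Pm Dm kl] kl unfolding Pm_def by (auto simp: Dmij intro!: sum.cong)
    finally show "(Bm * Pm) $$ (k,l) = (Pm * Dm) $$ (k,l)" .
  qed (use Pm Dm Bm in auto)
  have "Bm = Bm * (Pm * Qm)" using Bm PQ by simp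
  also have "\<dots> = (Bm * Pm) * Qm" using Bm Pm Qm by simp
  also have "\<dots> = Pm * Dm * Qm" using BP_PD by simp
  finally have BPDQ: "Bm = Pm * Dm * Qm" .
  have sim: "similar_mat Bm Dm"
    unfolding similar_mat_def similar_mat_wit_def Let_def
    by (rule exI[of _ Pm], rule exI[of _ Qm], insert Bm Pm Qm Dm PQ QP BPDQ, auto)
  obtain ds where ds: "char_poly Am = (\<Prod>a\<leftarrow>ds. [:- a, 1:])"
    "char_poly D1 = (\<Prod>a\<leftarrow>ds. [:- (real t * a + (real t - 1)), 1:])"
    using affine_char_poly[OF Am lin[folded Am_def], of "real t" "real t - 1"] unfolding D1_def by blast
  have ut4: "upper_triangular D4" unfolding D4_def upper_triangular_def by auto
  have c4: "char_poly D4 = (\<Prod>a\<leftarrow>diag_mat D4. [:- a, 1:])"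
    by (rule char_poly_upper_triangular[OF D4 ut4])
  have l1: "\<exists>es. char_poly D1 = (\<Prod>a\<leftarrow>es. [:- a, 1:])"
    using ds(2) by (intro exI[of _ "map (\<lambda>a. real t * a + (real t - 1)) ds"]) (simp add: o_def)
  have l4: "\<exists>es. char_poly D4 = (\<Prod>a\<leftarrow>es. [:- a, 1:])" using c4 by blast
  have "char_poly Bm = char_poly Dm" by (rule char_poly_similar[OF sim])
  also have "\<dots> = char_poly D1 * char_poly D4"
    by (rule char_poly_0_block[OF Dm_def l1 l4 D1 D2 D4])
  also have "\<dots> = (\<Prod>a\<leftarrow>map (\<lambda>a. real t * a + (real t - 1)) ds @ diag_mat D4. [:- a, 1:])"
    unfolding ds(2) c4 by (simp add: o_def)
  finally show ?thesis using ds(1) unfolding Am_def Bm_def N_def by blast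
qed

lemma step:
  fixes E :: "nat \<Rightarrow> nat \<Rightarrow> bool" and t n :: nat
  assumes n3: "3 \<le> n" and t: "1 \<le> t" and sg: "simple_graph n E"
    and E'_def: "E' = (\<lambda>k l. k \<noteq> l \<and> (k mod n = l mod n \<or> E (k mod n) (l mod n)))"
  shows "real t * lambda3 n E + (real t - 1) \<le> lambda3 (t * n) E'"
proof -
  have n: "0 < n" using n3 by simp
  let ?A = "adj_matrix n E"
  have A: "?A \<in> carrier_mat n n" unfolding adj_matrix_def by simp
  have sym: "?A $$ (i,j) = ?A $$ (j,i)" if "i < n" "j < n" for i j
    using sg that unfolding simple_graph_def adj_matrix_def by simp
  obtain es where es: "char_poly ?A = (\<Prod>a\<leftarrow>es. [:- a, 1:])" "length es = n"
    using real_sym_split[OF A sym] by blast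
  obtain ds rs where ds: "char_poly ?A = (\<Prod>a\<leftarrow>ds. [:- a, 1:])"
    "char_poly (adj_matrix (t * n) E') = (\<Prod>a\<leftarrow>map (\<lambda>a. real t * a + (real t - 1)) ds @ rs. [:- a, 1:])"
    using blowup[OF n t sg es(1) E'_def] by blast
  define g where "g = (\<lambda>a. real t * a + (real t - 1))"
  have pA: "eigenvalues_mset n E = mset ds" unfolding eigenvalues_mset_def ds(1) by (rule proots_lin)
  have "mset ds = mset es" using ds(1) es(1) proots_lin by metis
  hence "size (mset ds) = n" using es(2) by (metis size_mset)
  hence sz: "3 \<le> size (eigenvalues_mset n E)" using pA n3 by simp
  define \<mu> where "\<mu> = lambda3 n E"
  have mu: "\<mu> = rev (sorted_list_of_multiset (eigenvalues_mset n E)) ! 2"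
    unfolding \<mu>_def lambda3_def kth_largest_eigenvalue_def by simp
  have a: "3 \<le> size (filter_mset (\<lambda>x. \<mu> \<le> x) (mset ds))"
    using third_a[OF sz] unfolding mu pA .
  have pB: "eigenvalues_mset (t * n) E' = image_mset g (mset ds) + mset rs"
    unfolding eigenvalues_mset_def ds(2) proots_lin g_def by simp
  have tpos: "0 < real t" using t by simp
  have "filter_mset (\<lambda>x. g \<mu> \<le> x) (image_mset g (mset ds)) = image_mset g (filter_mset (\<lambda>x. g \<mu> \<le> g x) (mset ds))"
    by (rule filter_mset_image_mset)
  also have "filter_mset (\<lambda>x. g \<mu> \<le> g x) (mset ds) = filter_mset (\<lambda>x. \<mu> \<le> x) (mset ds)"
    unfolding g_def using tpos by (intro filter_mset_cong) auto
  finally have "size (filter_mset (\<lambda>x. g \<mu> \<le> x) (image_mset g (mset ds))) \<ge> 3" using a by simp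
  hence "3 \<le> size (filter_mset (\<lambda>x. g \<mu> \<le> x) (eigenvalues_mset (t * n) E'))"
    unfolding pB by simp
  hence "g \<mu> \<le> rev (sorted_list_of_multiset (eigenvalues_mset (t * n) E')) ! 2"
    by (rule third_b)
  thus ?thesis unfolding g_def \<mu>_def lambda3_def kth_largest_eigenvalue_def by simp
qed

lemma sg_blowup:
  assumes n: "0 < n" and sg: "simple_graph n E"
  shows "simple_graph N (\<lambda>k l. k \<noteq> l \<and> (k mod n = l mod n \<or> E (k mod n) (l mod n)))"
  using sg n unfolding simple_graph_def by auto

theorem lemma4p3:
  fixes \<kappa> :: real and f :: "nat \<Rightarrow> real"
  assumes bound: "\<And>n E. n \<ge> 3 \<Longrightarrow> simple_graph n E \<Longrightarrow> lambda3 n E \<le> \<kappa> * real n + f n"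
    and lim: "(\<lambda>n. f n / real n) \<longlonglongrightarrow> 0"
  shows "\<And>n E. n \<ge> 3 \<Longrightarrow> simple_graph n E \<Longrightarrow> lambda3 n E \<le> \<kappa> * real n - 1"
proof -
  fix n E assume n3: "n \<ge> 3" and sg: "simple_graph n E"
  have n: "0 < n" using n3 by simp
  define E' where "E' = (\<lambda>k l. k \<noteq> l \<and> (k mod n = l mod n \<or> E (k mod n) (l mod n)))"
  define \<mu> where "\<mu> = lambda3 n E"
  have ineq: "(\<mu> + 1) / real n \<le> \<kappa> + f (t * n) / real (t * n) + 1 / real (t * n)" if t: "1 \<le> t" for t
  proof -
    have "real t * \<mu> + (real t - 1) \<le> lambda3 (t * n) E'"
      unfolding \<mu>_def by (rule step[OF n3 t sg E'_def])
    also have "\<dots> \<le> \<kappa> * real (t * n) + f (t * n)"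
    proof (rule bound)
      show "3 \<le> t * n" using n3 t by (metis le_trans mult_1 mult_le_mono1)
      show "simple_graph (t * n) E'" unfolding E'_def by (rule sg_blowup[OF n sg])
    qed
    finally have h: "real t * \<mu> + (real t - 1) \<le> \<kappa> * real (t * n) + f (t * n)" .
    have tn: "0 < real (t * n)" using t n by simp
    have "(\<mu> + 1) / real n = (real t * \<mu> + (real t - 1) + 1) / real (t * n)"
      using t n by (simp add: field_simps)
    also have "\<dots> \<le> (\<kappa> * real (t * n) + f (t * n) + 1) / real (t * n)"
      using h tn by (simp add: divide_right_mono)
    also have "\<dots> = \<kappa> * real (t * n) / real (t * n) + f (t * n) / real (t * n) + 1 / real (t * n)"
      by (simp add: add_divide_distrib)
    also have "\<dots> = \<kappa> + f (t * n) / real (t * n) + 1 / real (t * n)"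
      using t n by simp
    finally show ?thesis .
  qed
  have sm: "strict_mono (\<lambda>t. t * n)" using n by (simp add: strict_mono_def)
  have l1: "(\<lambda>t. f (t * n) / real (t * n)) \<longlonglongrightarrow> 0"
    using LIMSEQ_subseq_LIMSEQ[OF lim sm] by (simp add: o_def)
  have l2: "(\<lambda>t. 1 / real (t * n)) \<longlonglongrightarrow> 0"
    using LIMSEQ_subseq_LIMSEQ[OF lim_inverse_n' sm] by (simp add: o_def)
  have "(\<lambda>t. \<kappa> + f (t * n) / real (t * n) + 1 / real (t * n)) \<longlonglongrightarrow> \<kappa> + 0 + 0"
    by (intro tendsto_add tendsto_const l1 l2)
  hence "(\<mu> + 1) / real n \<le> \<kappa> + 0 + 0"
    by (rule LIMSEQ_le_const) (use ineq in blast)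
  hence "\<mu> + 1 \<le> \<kappa> * real n" using n by (simp add: divide_le_eq)
  thus "lambda3 n E \<le> \<kappa> * real n - 1" unfolding \<mu>_def by simp
qed

end
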